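(* Fix $N=\{1,\dots,n\}$ and $N_0=N\cup\{0\}$, and let $RS^{N_0}$ be the class of RS-games with player set $N_0$. There is a unique solution $\xi$ on $RS^{N_0}$ satisfying (EF), (SR), (RR) and (PD), namely \[\xi_0(v)=n\beta,\qquad \xi_i(v)=v(\{0,i\})-\beta\ \ (i\in N),\qquad\text{where }\beta=\min_{S\subseteq N,\,S\neq\emptyset}\frac{v(S_0)-v(S)}{s}.\] Here, for a solution $\varphi$ and every $v\in RS^{N_0}$: (EF) $\sum_{i\in N_0}\varphi_i(v)=v(N_0)$; (SR) $\sum_{i\in S}\varphi_i(v)\ge v(S)$ for all coalitions $S\subseteq N$; (RR) for every $i\in N$ there is a nonempty coalition $S^i\subseteq N$ with $\varphi_i(v)=v(\{0,i\})-\frac{v(S^i_0)-v(S^i)}{s^i}$, where $s^i=|S^i|$; (PD) $\varphi_i(v)-\varphi_j(v)=v(\{0,i\})-v(\{0,j\})$ for all $i,j\in N$ with $i\neq j$.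
   Context: Let $c\in\mathbb{R}$. An RS-problem is a triple $(c,w,p)$ where $w:\mathbb{R}_+\to(c,+\infty)$ is decreasing (non-increasing) and continuous, and $p:\mathbb{R}_+\to\mathbb{R}$ is decreasing (non-increasing) and continuous, satisfies $p(0)>w(0)$, and there exists $q>0$ with $p(q)=c$. An RS-situation is a tuple $(N_0,c,w,P)$ where $N=\{1,\dots,n\}$ is the set of retailers, $0$ denotes the supplier, $N_0=N\cup\{0\}$, $P=(p_1,\dots,p_n)$, and $(c,w,p_i)$ is an RS-problem for each $i\in N$. For $S\subseteq N$ write $S_0=S\cup\{0\}$ and $s=|S|$. For $q\ge0$ and $\omega\in\mathbb{R}$, $\Pi_i^{ret}(q;\omega)=(p_i(q)-\omega)q$. For nonempty $S\subseteq N$, $(q_i^S)_{i\in S}$ is a fixed optimal solution of: maximize $\sum_{i\in S}(p_i(q_i)-w(q_S))q_i$ over $q\in\mathbb{R}_+^{S}$ subject to $p_i(q_i)\ge w(q_S)$ for all $i\in S$, where $q_S=\sum_{i\in S}q_i$; $q_S^S=\sum_{i\in S}q_i^S$. For $i\in N$, $q_i^c$ is a fixed optimal solution of: maximize $(p_i(q)-c)q$ over $q\ge0$ subject to $p_i(q)\ge c$. The corresponding RS-game $(N_0,v)$ is the TU game on $N_0$ with $v(\emptyset)=0$ and, for all $S\subseteq N$, $v(S)=\sum_{i\in S}\Pi_i^{ret}(q_i^S;w(q_S^S))$ and $v(S_0)=\sum_{i\in S}\Pi_i^{ret}(q_i^c;c)$. A (single-valued) solution on $RS^{N_0}$ is a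 map $\varphi$ assigning to each $v\in RS^{N_0}$ a vector $\varphi(v)=(\varphi_i(v))_{i\in N_0}\in\mathbb{R}^{N_0}$. *)

theory Defs
  imports "HOL-Analysis.Analysis"
begin

text \<open>Players are natural numbers: 0 is the supplier, retailers are 1..n.
  A TU game on N0 = {0..n} is a function on nat sets (zero outside subsets of N0).\<close>

definition rs_problem :: "real \<Rightarrow> (real \<Rightarrow> real) \<Rightarrow> (real \<Rightarrow> real) \<Rightarrow> bool" where
  "rs_problem c w p \<longleftrightarrow>
     (\<forall>x\<ge>0. w x > c) \<and> (\<forall>x y. 0 \<le> x \<longrightarrow> x \<le> y \<longrightarrow> w y \<le> w x) \<and> continuous_on {0..} w \<and>
     (\<forall>x y. 0 \<le> x \<longrightarrow> x \<le> y \<longrightarrow> p y \<le> p x) \<and> continuous_on {0..} p \<and>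
     p 0 > w 0 \<and> (\<exists>q>0. p q = c)"

definition ret_profit :: "(real \<Rightarrow> real) \<Rightarrow> real \<Rightarrow> real \<Rightarrow> real" where
  "ret_profit p q \<omega> = (p q - \<omega>) * q"

definition coal_feasible :: "(real \<Rightarrow> real) \<Rightarrow> (nat \<Rightarrow> real \<Rightarrow> real) \<Rightarrow> nat set \<Rightarrow> (nat \<Rightarrow> real) \<Rightarrow> bool" where
  "coal_feasible w P S q \<longleftrightarrow> (\<forall>i\<in>S. 0 \<le> q i) \<and> (\<forall>i\<in>S. P i (q i) \<ge> w (\<Sum>j\<in>S. q j))"

definition coal_obj :: "(real \<Rightarrow> real) \<Rightarrow> (nat \<Rightarrow> real \<Rightarrow> real) \<Rightarrow> nat set \<Rightarrow> (nat \<Rightarrow> real) \<Rightarrow> real" where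
  "coal_obj w P S q = (\<Sum>i\<in>S. ret_profit (P i) (q i) (w (\<Sum>j\<in>S. q j)))"

definition coal_optimal :: "(real \<Rightarrow> real) \<Rightarrow> (nat \<Rightarrow> real \<Rightarrow> real) \<Rightarrow> nat set \<Rightarrow> (nat \<Rightarrow> real) \<Rightarrow> bool" where
  "coal_optimal w P S q \<longleftrightarrow> coal_feasible w P S q \<and>
     (\<forall>q'. coal_feasible w P S q' \<longrightarrow> coal_obj w P S q' \<le> coal_obj w P S q)"

definition ind_optimal :: "real \<Rightarrow> (real \<Rightarrow> real) \<Rightarrow> real \<Rightarrow> bool" where
  "ind_optimal c p x \<longleftrightarrow> 0 \<le> x \<and> p x \<ge> c \<and>
     (\<forall>y. 0 \<le> y \<longrightarrow> p y \<ge> c \<longrightarrow> (p y - c) * y \<le> (p x - c) * x)"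

text \<open>The RS-game associated to an RS-situation with fixed optimal solutions
  qS S (for the coalition problems) and qc i (for the individual problems).\<close>
definition rs_game_of :: "nat \<Rightarrow> real \<Rightarrow> (real \<Rightarrow> real) \<Rightarrow> (nat \<Rightarrow> real \<Rightarrow> real)
    \<Rightarrow> (nat set \<Rightarrow> nat \<Rightarrow> real) \<Rightarrow> (nat \<Rightarrow> real) \<Rightarrow> nat set \<Rightarrow> real" where
  "rs_game_of n c w P qS qc T =
     (if T \<subseteq> {0..n} then
        (if 0 \<in> T then (\<Sum>i\<in>T - {0}. ret_profit (P i) (qc i) c)
         else (\<Sum>i\<in>T. ret_profit (P i) (qS T i) (w (\<Sum>j\<in>T. qS T j))))
      else 0)"

definition RS_games :: "nat \<Rightarrow> (nat set \<Rightarrow> real) set" where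
  "RS_games n = {v. \<exists>c w P qS qc.
      (\<forall>i\<in>{1..n}. rs_problem c w (P i)) \<and>
      (\<forall>S. S \<subseteq> {1..n} \<longrightarrow> S \<noteq> {} \<longrightarrow> coal_optimal w P S (qS S)) \<and>
      (\<forall>i\<in>{1..n}. ind_optimal c (P i) (qc i)) \<and>
      v = rs_game_of n c w P qS qc}"

definition sol_EF :: "nat \<Rightarrow> ((nat set \<Rightarrow> real) \<Rightarrow> nat \<Rightarrow> real) \<Rightarrow> bool" where
  "sol_EF n \<phi> \<longleftrightarrow> (\<forall>v\<in>RS_games n. (\<Sum>i\<in>{0..n}. \<phi> v i) = v {0..n})"

definition sol_SR :: "nat \<Rightarrow> ((nat set \<Rightarrow> real) \<Rightarrow> nat \<Rightarrow> real) \<Rightarrow> bool" where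
  "sol_SR n \<phi> \<longleftrightarrow> (\<forall>v\<in>RS_games n. \<forall>S. S \<subseteq> {1..n} \<longrightarrow> (\<Sum>i\<in>S. \<phi> v i) \<ge> v S)"

definition sol_RR :: "nat \<Rightarrow> ((nat set \<Rightarrow> real) \<Rightarrow> nat \<Rightarrow> real) \<Rightarrow> bool" where
  "sol_RR n \<phi> \<longleftrightarrow> (\<forall>v\<in>RS_games n. \<forall>i\<in>{1..n}. \<exists>S. S \<subseteq> {1..n} \<and> S \<noteq> {} \<and>
      \<phi> v i = v {0, i} - (v (insert 0 S) - v S) / real (card S))"

definition sol_PD :: "nat \<Rightarrow> ((nat set \<Rightarrow> real) \<Rightarrow> nat \<Rightarrow> real) \<Rightarrow> bool" where
  "sol_PD n \<phi> \<longleftrightarrow> (\<forall>v\<in>RS_games n. \<forall>i\<in>{1..n}. \<forall>j\<in>{1..n}. i \<noteq> j \<longrightarrow>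
      \<phi> v i - \<phi> v j = v {0, i} - v {0, j})"

definition rs_beta :: "nat \<Rightarrow> (nat set \<Rightarrow> real) \<Rightarrow> real" where
  "rs_beta n v = Min {(v (insert 0 S) - v S) / real (card S) | S. S \<subseteq> {1..n} \<and> S \<noteq> {}}"

definition rs_xi :: "nat \<Rightarrow> (nat set \<Rightarrow> real) \<Rightarrow> nat \<Rightarrow> real" where
  "rs_xi n v i = (if i = 0 then real n * rs_beta n v else v {0, i} - rs_beta n v)"

end

theory Submission
  imports Defs
begin

lemma rs_empty: "v \<in> RS_games n \<Longrightarrow> v {} = 0"
  by (auto simp: RS_games_def rs_game_of_def)

lemma rs_add:
  assumes "v \<in> RS_games n" "S \<subseteq> {1..n}"
  shows "v (insert 0 S) = (\<Sum>i\<in>S. v {0, i})"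
proof -
  obtain c w P qS qc where v: "v = rs_game_of n c w P qS qc"
    using assms(1) by (auto simp: RS_games_def)
  have 1: "insert 0 S \<subseteq> {0..n}" using assms(2) by auto
  have 2: "insert 0 S - {0} = S" using assms(2) by auto
  have 3: "\<And>i. i \<in> S \<Longrightarrow> v {0, i} = ret_profit (P i) (qc i) c"
  proof -
    fix i assume "i \<in> S"
    then have "{0, i} \<subseteq> {0..n}" "{0,i} - {0} = {i}" using assms(2) by auto
    then show "v {0, i} = ret_profit (P i) (qc i) c" by (simp add: v rs_game_of_def)
  qed
  show ?thesis using 1 2 3 by (simp add: v rs_game_of_def)
qed

lemma beta_fin: "finite {(v (insert 0 S) - v S) / real (card S) | S. S \<subseteq> {1..(n::nat)} \<and> S \<noteq> {}}"
proof -
  have "{(v (insert 0 S) - v S) / real (card S) | S. S \<subseteq> {1..n} \<and> S \<noteq> {}}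
        = (\<lambda>S. (v (insert 0 S) - v S) / real (card S)) ` {S. S \<subseteq> {1..n} \<and> S \<noteq> {}}" by auto
  moreover have "finite {S. S \<subseteq> {1..n} \<and> S \<noteq> {}}"
    by (rule finite_subset[of _ "Pow {1..n}"]) auto
  ultimately show ?thesis by simp
qed

lemma beta_le: "S \<subseteq> {1..n} \<Longrightarrow> S \<noteq> {} \<Longrightarrow> rs_beta n v \<le> (v (insert 0 S) - v S) / real (card S)"
  unfolding rs_beta_def by (rule Min_le[OF beta_fin]) auto

lemma beta_in: assumes "1 \<le> n"
  shows "\<exists>S. S \<subseteq> {1..n} \<and> S \<noteq> {} \<and> rs_beta n v = (v (insert 0 S) - v S) / real (card S)"
proof -
  have "{1} \<subseteq> {1..n}" using assms by auto
  then have ne: "{(v (insert 0 S) - v S) / real (card S) | S. S \<subseteq> {1..n} \<and> S \<noteq> {}} \<noteq> {}" by blast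
  show ?thesis using Min_in[OF beta_fin ne] unfolding rs_beta_def by auto
qed

lemma beta_mult: assumes "S \<subseteq> {1..n}" "S \<noteq> {}"
  shows "real (card S) * rs_beta n v \<le> v (insert 0 S) - v S"
proof -
  have "finite S" using assms(1) finite_subset by blast
  then have "real (card S) > 0" using assms(2) by (simp add: card_gt_0_iff)
  then show ?thesis using beta_le[OF assms, of v] by (simp add: field_simps)
qed

lemma N0: "{0..n} = insert 0 {1..(n::nat)}" by auto

theorem theorem6p1:
  shows "(sol_EF n (rs_xi n) \<and> sol_SR n (rs_xi n) \<and> sol_RR n (rs_xi n) \<and> sol_PD n (rs_xi n)) \<and>
    (\<forall>\<phi>. sol_EF n \<phi> \<and> sol_SR n \<phi> \<and> sol_RR n \<phi> \<and> sol_PD n \<phi> \<longrightarrow>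
       (\<forall>v\<in>RS_games n. \<forall>i\<in>{0..n}. \<phi> v i = rs_xi n v i))"
proof (intro conjI allI impI ballI)
  show "sol_EF n (rs_xi n)"
    unfolding sol_EF_def
  proof
    fix v assume v: "v \<in> RS_games n"
    have "(\<Sum>i\<in>{0..n}. rs_xi n v i) = rs_xi n v 0 + (\<Sum>i\<in>{1..n}. rs_xi n v i)"
      by (simp add: N0)
    also have "(\<Sum>i\<in>{1..n}. rs_xi n v i) = (\<Sum>i\<in>{1..n}. v {0,i} - rs_beta n v)"
      by (rule sum.cong) (auto simp: rs_xi_def)
    also have "rs_xi n v 0 + \<dots> = (\<Sum>i\<in>{1..n}. v {0,i})"
      by (simp add: rs_xi_def sum_subtractf)
    also have "\<dots> = v {0..n}" using rs_add[OF v, of "{1..n}"] by (simp add: N0)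
    finally show "(\<Sum>i\<in>{0..n}. rs_xi n v i) = v {0..n}" .
  qed
  show "sol_SR n (rs_xi n)"
    unfolding sol_SR_def
  proof (intro ballI allI impI)
    fix v S assume v: "v \<in> RS_games n" and S: "S \<subseteq> {1..n}"
    show "(\<Sum>i\<in>S. rs_xi n v i) \<ge> v S"
    proof (cases "S = {}")
      case True then show ?thesis using rs_empty[OF v] by simp
    next
      case False
      have "(\<Sum>i\<in>S. rs_xi n v i) = (\<Sum>i\<in>S. v {0,i} - rs_beta n v)"
        by (rule sum.cong) (use S in \<open>auto simp: rs_xi_def\<close>)
      also have "\<dots> = v (insert 0 S) - real (card S) * rs_beta n v"
        using rs_add[OF v S] by (simp add: sum_subtractf)
      finally show ?thesis using beta_mult[OF S False, of v] by linarith
    qed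
  qed
  show "sol_RR n (rs_xi n)"
    unfolding sol_RR_def
  proof (intro ballI)
    fix v i assume i: "i \<in> {1..n}"
    then have "1 \<le> n" by auto
    from beta_in[OF this, of v] obtain S where "S \<subseteq> {1..n} \<and> S \<noteq> {} \<and> rs_beta n v = (v (insert 0 S) - v S) / real (card S)" by blast
    then show "\<exists>S. S \<subseteq> {1..n} \<and> S \<noteq> {} \<and> rs_xi n v i = v {0, i} - (v (insert 0 S) - v S) / real (card S)"
      using i by (auto simp: rs_xi_def)
  qed
  show "sol_PD n (rs_xi n)"
    unfolding sol_PD_def by (auto simp: rs_xi_def)
next
  fix \<phi> v i
  assume A: "sol_EF n \<phi> \<and> sol_SR n \<phi> \<and> sol_RR n \<phi> \<and> sol_PD n \<phi>"
    and v: "v \<in> RS_games n" and i: "i \<in> {0..n}"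
  have EF: "(\<Sum>i\<in>{0..n}. \<phi> v i) = v {0..n}" using A v by (auto simp: sol_EF_def)
  have SR: "\<And>S. S \<subseteq> {1..n} \<Longrightarrow> (\<Sum>i\<in>S. \<phi> v i) \<ge> v S" using A v by (auto simp: sol_SR_def)
  have RR: "\<And>i. i\<in>{1..n} \<Longrightarrow> \<exists>S. S \<subseteq> {1..n} \<and> S \<noteq> {} \<and>
      \<phi> v i = v {0, i} - (v (insert 0 S) - v S) / real (card S)" using A v by (auto simp: sol_RR_def)
  have PD: "\<And>i j. i\<in>{1..n} \<Longrightarrow> j\<in>{1..n} \<Longrightarrow> i \<noteq> j \<Longrightarrow> \<phi> v i - \<phi> v j = v {0, i} - v {0, j}"
    using A v by (auto simp: sol_PD_def)
  have ret: "\<phi> v j = v {0,j} - rs_beta n v" if j: "j \<in> {1..n}" for j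
  proof -
    define \<gamma> where "\<gamma> = v {0,j} - \<phi> v j"
    have all: "\<phi> v k = v {0,k} - \<gamma>" if "k \<in> {1..n}" for k
      using PD[OF that j] unfolding \<gamma>_def by (cases "k = j") auto
    from RR[OF j] obtain S where S: "S \<subseteq> {1..n}" "S \<noteq> {}"
      "\<phi> v j = v {0, j} - (v (insert 0 S) - v S) / real (card S)" by blast
    have g1: "\<gamma> \<ge> rs_beta n v" using beta_le[OF S(1,2), of v] S(3) unfolding \<gamma>_def by simp
    have "1 \<le> n" using j by auto
    from beta_in[OF this, of v] obtain T where T: "T \<subseteq> {1..n}" "T \<noteq> {}"
      "rs_beta n v = (v (insert 0 T) - v T) / real (card T)" by blast
    have "(\<Sum>k\<in>T. \<phi> v k) = (\<Sum>k\<in>T. v {0,k} - \<gamma>)"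
      by (rule sum.cong) (use T all in auto)
    also have "\<dots> = v (insert 0 T) - real (card T) * \<gamma>"
      using rs_add[OF v T(1)] by (simp add: sum_subtractf)
    finally have "v (insert 0 T) - real (card T) * \<gamma> \<ge> v T" using SR[OF T(1)] by linarith
    moreover have "finite T" using T(1) finite_subset by blast
    then have "real (card T) > 0" using T(2) by (simp add: card_gt_0_iff)
    moreover have "rs_beta n v * real (card T) = v (insert 0 T) - v T"
      using T(3) \<open>real (card T) > 0\<close> by (simp add: field_simps)
    ultimately have "\<gamma> * real (card T) \<le> rs_beta n v * real (card T)" by (simp only: mult.commute)
    then have "\<gamma> \<le> rs_beta n v" using \<open>real (card T) > 0\<close> by (simp add: mult_le_cancel_right)
    with g1 show ?thesis unfolding \<gamma>_def by linarith
  qed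
  show "\<phi> v i = rs_xi n v i"
  proof (cases "i = 0")
    case False
    then show ?thesis using ret[of i] i by (simp add: rs_xi_def)
  next
    case True
    have "(\<Sum>i\<in>{0..n}. \<phi> v i) = \<phi> v 0 + (\<Sum>i\<in>{1..n}. \<phi> v i)"
      by (simp add: N0)
    also have "(\<Sum>i\<in>{1..n}. \<phi> v i) = (\<Sum>i\<in>{1..n}. v {0,i} - rs_beta n v)"
      by (rule sum.cong) (auto simp: ret)
    also have "\<dots> = (\<Sum>i\<in>{1..n}. v {0,i}) - real n * rs_beta n v"
      by (simp add: sum_subtractf)
    finally have "\<phi> v 0 = v {0..n} - (\<Sum>i\<in>{1..n}. v {0,i}) + real n * rs_beta n v"
      using EF by linarith
    moreover have "v {0..n} = (\<Sum>i\<in>{1..n}. v {0,i})" using rs_add[OF v, of "{1..n}"] by (simp add: N0)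
    ultimately show ?thesis using True by (simp add: rs_xi_def)
  qed
qed

end
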